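(* Let $n\ge 2$, $m\ge 2$, and let $\mathcal{A}=(a_{i_1\ldots i_m})\in S_{m,n+1}$ be a regularly decomposable tensor. Then $\mathcal{A}$ can be written as $$\mathcal{A}=\sum_{k=1}^r \alpha_k\left(\mathbf{v}^{(k)}\right)^{\otimes m},$$ where $\alpha_k>0$ and $\mathbf{v}^{(k)}=(1,v^{(k)}_1,\ldots,v^{(k)}_n)^\top\in\mathbb{R}^{n+1}$ with $\sum_{i=1}^n\left(v^{(k)}_i\right)^2=1$ for $k=1,\ldots,r$. Furthermore, $$a_{00i_3\ldots i_m}=\sum_{i=1}^n a_{ii\,i_3\ldots i_m}$$ for all $i_3,\ldots,i_m\in\{0,1,\ldots,n\}$.
   Context: Vectors in $\mathbb{R}^{n+1}$ are indexed $\mathbf{x}=(x_0,x_1,\ldots,x_n)^\top$, with $n\ge 2$. $S_{m,n+1}$ denotes the space of real symmetric tensors $\mathcal{A}=(a_{i_1\ldots i_m})$ of order $m$ and dimension $n+1$ (indices in $\{0,\ldots,n\}$, entries invariant under permutations of indices). For $\mathbf{u}\in\mathbb{R}^{n+1}$, $\mathbf{u}^{\otimes m}$ is the tensor with entries $u_{i_1}\cdots u_{i_m}$. A vector $\mathbf{x}\in\mathbb{R}^{n+1}$ is regular if $x_0\neq 0$ and $x_0^2=x_1^2+\cdots+x_n^2$. For $\mathcal{A}\in S_{m,n+1}$, its $i$th row tensor is $\mathcal{A}_i=(a_{i i_2\ldots i_m})\in S_{m-1,n+1}$, $i=0,\ldots,n$. Regularly decomposable tensors: (i) if $m=2l$ is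 even, $\mathcal{A}\in S_{m,n+1}$ is regularly decomposable if $\mathcal{A}=\sum_{k=1}^r(\mathbf{u}^{(k)})^{\otimes m}$ for some regular vectors $\mathbf{u}^{(1)},\ldots,\mathbf{u}^{(r)}$; (ii) if $m=2l+1$ is odd, $\mathcal{A}\in S_{m,n+1}$ is regularly decomposable if its row tensor $\mathcal{A}_0\in S_{2l,n+1}$ has a decomposition $\mathcal{A}_0=\sum_{k=1}^r(\mathbf{u}^{(k)})^{\otimes 2l}$ with regular vectors $\mathbf{u}^{(k)}=(u^{(k)}_0,\ldots,u^{(k)}_n)^\top$, and the other row tensors satisfy $\mathcal{A}_i=\sum_{k=1}^r\frac{u^{(k)}_i}{u^{(k)}_0}(\mathbf{u}^{(k)})^{\otimes 2l}$ for $i=1,\ldots,n$. *)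

theory Defs
  imports Complex_Main "HOL-Library.Multiset"
begin

text \<open>Vectors in R^(n+1) are functions nat => real, only the entries 0..n matter.
  A tensor of order m and dimension n+1 is a function on index lists;
  only index lists of length m with entries in {0..n} matter.\<close>

definition idx :: "nat \<Rightarrow> nat \<Rightarrow> nat list set" where
  "idx m n = {xs. length xs = m \<and> set xs \<subseteq> {0..n}}"

definition sym_tensor :: "nat \<Rightarrow> nat \<Rightarrow> (nat list \<Rightarrow> real) \<Rightarrow> bool" where
  "sym_tensor m n A \<longleftrightarrow>
     (\<forall>xs\<in>idx m n. \<forall>ys\<in>idx m n. mset xs = mset ys \<longrightarrow> A xs = A ys)"

definition tpow :: "(nat \<Rightarrow> real) \<Rightarrow> nat list \<Rightarrow> real" where
  "tpow u xs = prod_list (map u xs)"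

definition regular :: "nat \<Rightarrow> (nat \<Rightarrow> real) \<Rightarrow> bool" where
  "regular n x \<longleftrightarrow> x 0 \<noteq> 0 \<and> (x 0)\<^sup>2 = (\<Sum>i=1..n. (x i)\<^sup>2)"

definition reg_decomposable :: "nat \<Rightarrow> nat \<Rightarrow> (nat list \<Rightarrow> real) \<Rightarrow> bool" where
  "reg_decomposable m n A \<longleftrightarrow>
    (if even m then
      (\<exists>(r::nat) (u::nat \<Rightarrow> nat \<Rightarrow> real). (\<forall>k<r. regular n (u k)) \<and>
         (\<forall>xs\<in>idx m n. A xs = (\<Sum>k<r. tpow (u k) xs)))
     else
      (\<exists>(r::nat) (u::nat \<Rightarrow> nat \<Rightarrow> real). (\<forall>k<r. regular n (u k)) \<and>
         (\<forall>xs\<in>idx (m - 1) n. A (0 # xs) = (\<Sum>k<r. tpow (u k) xs)) \<and>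
         (\<forall>i\<in>{1..n}. \<forall>xs\<in>idx (m - 1) n.
             A (i # xs) = (\<Sum>k<r. (u k i / u k 0) * tpow (u k) xs))))"

end

theory Submission
  imports Defs
begin

lemma tpow_cons: "tpow u (x # xs) = u x * tpow u xs"
  by (simp add: tpow_def)

lemma tpow_scale: "tpow u xs = (u 0) ^ length xs * tpow (\<lambda>i. u i / u 0) xs"
  if "u 0 \<noteq> 0" for u :: "nat \<Rightarrow> real"
  using that by (induction xs) (auto simp: tpow_def)

lemma reg_norm:
  assumes "regular n u"
  shows "(\<Sum>i=1..n. (u i / u 0)\<^sup>2) = 1" "u 0 \<noteq> 0"
proof -
  have "(\<Sum>i=1..n. (u i / u 0)\<^sup>2) = (\<Sum>i=1..n. (u i)\<^sup>2) / (u 0)\<^sup>2"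
    by (simp add: power_divide sum_divide_distrib)
  also have "\<dots> = 1" using assms unfolding regular_def by (metis divide_self power_not_zero)
  finally show "(\<Sum>i=1..n. (u i / u 0)\<^sup>2) = 1" .
  show "u 0 \<noteq> 0" using assms by (simp add: regular_def)
qed

lemma idx_cons: "x # xs \<in> idx m n \<longleftrightarrow> m > 0 \<and> x \<le> n \<and> xs \<in> idx (m - 1) n"
  by (auto simp: idx_def)

lemma first_part:
  assumes "m \<ge> 2" "reg_decomposable m n A"
  shows "\<exists>(r::nat) (\<alpha>::nat \<Rightarrow> real) (v::nat \<Rightarrow> nat \<Rightarrow> real).
            (\<forall>k<r. \<alpha> k > 0 \<and> v k 0 = 1 \<and> (\<Sum>i=1..n. (v k i)\<^sup>2) = 1) \<and>
            (\<forall>xs\<in>idx m n. A xs = (\<Sum>k<r. \<alpha> k * tpow (v k) xs))"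
proof (cases "even m")
  case True
  then obtain r :: nat and u :: "nat \<Rightarrow> nat \<Rightarrow> real" where u: "\<forall>k<r. regular n (u k)"
    "\<forall>xs\<in>idx m n. A xs = (\<Sum>k<r. tpow (u k) xs)"
    using assms(2) True unfolding reg_decomposable_def by meson
  define v where "v = (\<lambda>k i. u k i / u k 0)"
  define \<alpha> where "\<alpha> = (\<lambda>k. (u k 0) ^ m)"
  show ?thesis
  proof (intro exI[of _ r] exI[of _ \<alpha>] exI[of _ v] conjI ballI allI impI)
    fix k assume k: "k < r"
    have nz: "u k 0 \<noteq> 0" using reg_norm u k by blast
    show "\<alpha> k > 0" unfolding \<alpha>_def using True nz
      by (simp add: zero_less_power_eq)
    show "v k 0 = 1" using nz by (simp add: v_def)
    show "(\<Sum>i=1..n. (v k i)\<^sup>2) = 1" unfolding v_def using reg_norm u k by blast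
  next
    fix xs assume xs: "xs \<in> idx m n"
    have "length xs = m" using xs by (simp add: idx_def)
    have nz: "\<forall>k<r. u k 0 \<noteq> 0" using u(1) reg_norm(2) by blast
    show "A xs = (\<Sum>k<r. \<alpha> k * tpow (v k) xs)"
      using u(2) xs nz \<open>length xs = m\<close> unfolding \<alpha>_def v_def
      by (auto intro!: sum.cong tpow_scale)
  qed
next
  case False
  then obtain r :: nat and u :: "nat \<Rightarrow> nat \<Rightarrow> real" where u: "\<forall>k<r. regular n (u k)"
    "\<forall>xs\<in>idx (m - 1) n. A (0 # xs) = (\<Sum>k<r. tpow (u k) xs)"
    "\<forall>i\<in>{1..n}. \<forall>xs\<in>idx (m - 1) n.
             A (i # xs) = (\<Sum>k<r. (u k i / u k 0) * tpow (u k) xs)"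
    using assms(2) False unfolding reg_decomposable_def by meson
  have u': "A (j # xs) = (\<Sum>k<r. (u k j / u k 0) * tpow (u k) xs)"
    if "j \<le> n" "xs \<in> idx (m - 1) n" for j xs
  proof (cases "j = 0")
    case True
    have "\<forall>k<r. u k 0 \<noteq> 0" using u(1) reg_norm(2) by blast
    then show ?thesis using u(2) that True by simp
  next
    case False
    then show ?thesis using u(3) that by auto
  qed
  define v where "v = (\<lambda>k i. u k i / u k 0)"
  define \<alpha> where "\<alpha> = (\<lambda>k. (u k 0) ^ (m - 1))"
  show ?thesis
  proof (intro exI[of _ r] exI[of _ \<alpha>] exI[of _ v] conjI ballI allI impI)
    fix k assume k: "k < r"
    have nz: "u k 0 \<noteq> 0" using reg_norm u k by blast
    have "even (m - 1)" using False assms(1) by simp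
    then show "\<alpha> k > 0" unfolding \<alpha>_def using nz
      by (simp add: zero_less_power_eq)
    show "v k 0 = 1" using nz by (simp add: v_def)
    show "(\<Sum>i=1..n. (v k i)\<^sup>2) = 1" unfolding v_def using reg_norm u k by blast
  next
    fix xs assume xs: "xs \<in> idx m n"
    then obtain j ys where xs': "xs = j # ys" using assms(1)
      by (cases xs) (auto simp: idx_def)
    have j: "j \<le> n" "ys \<in> idx (m - 1) n" using xs xs' idx_cons by auto
    have len: "length ys = m - 1" using j(2) by (simp add: idx_def)
    have "A xs = (\<Sum>k<r. (u k j / u k 0) * tpow (u k) ys)" using u' j xs' by simp
    also have "\<dots> = (\<Sum>k<r. \<alpha> k * tpow (v k) xs)"
    proof (rule sum.cong)
      fix k assume "k \<in> {..<r}"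
      then have nz: "u k 0 \<noteq> 0" using reg_norm u by blast
      show "(u k j / u k 0) * tpow (u k) ys = \<alpha> k * tpow (v k) xs"
        unfolding xs' tpow_cons \<alpha>_def v_def tpow_scale[of "u k" ys, OF nz] len by simp
    qed simp
    finally show "A xs = (\<Sum>k<r. \<alpha> k * tpow (v k) xs)" .
  qed
qed

theorem theorem2p4:
  fixes m n :: nat and A :: "nat list \<Rightarrow> real"
  assumes "n \<ge> 2" and "m \<ge> 2"
    and "sym_tensor m n A"
    and "reg_decomposable m n A"
  shows "(\<exists>(r::nat) (\<alpha>::nat \<Rightarrow> real) (v::nat \<Rightarrow> nat \<Rightarrow> real).
            (\<forall>k<r. \<alpha> k > 0 \<and> v k 0 = 1 \<and> (\<Sum>i=1..n. (v k i)\<^sup>2) = 1) \<and>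
            (\<forall>xs\<in>idx m n. A xs = (\<Sum>k<r. \<alpha> k * tpow (v k) xs)))
       \<and> (\<forall>ys\<in>idx (m - 2) n. A (0 # 0 # ys) = (\<Sum>i=1..n. A (i # i # ys)))"
proof -
  obtain r :: nat and \<alpha> :: "nat \<Rightarrow> real" and v :: "nat \<Rightarrow> nat \<Rightarrow> real" where rv: "\<forall>k<r. \<alpha> k > 0 \<and> v k 0 = 1 \<and> (\<Sum>i=1..n. (v k i)\<^sup>2) = 1"
    "\<forall>xs\<in>idx m n. A xs = (\<Sum>k<r. \<alpha> k * tpow (v k) xs)"
    using first_part[OF assms(2,4)] by (elim exE conjE) blast
  have "\<forall>ys\<in>idx (m - 2) n. A (0 # 0 # ys) = (\<Sum>i=1..n. A (i # i # ys))"
  proof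
    fix ys assume ys: "ys \<in> idx (m - 2) n"
    have mem: "i # i # ys \<in> idx m n" if "i \<le> n" for i
      using ys that assms(2) by (auto simp: idx_def)
    have "A (0 # 0 # ys) = (\<Sum>k<r. \<alpha> k * tpow (v k) ys)"
      using rv mem[of 0] by (simp add: tpow_cons)
    also have "\<dots> = (\<Sum>k<r. \<Sum>i=1..n. \<alpha> k * ((v k i)\<^sup>2 * tpow (v k) ys))"
    proof (rule sum.cong)
      fix k assume "k \<in> {..<r}"
      then have "(\<Sum>i=1..n. (v k i)\<^sup>2) = 1" using rv by auto
      then show "\<alpha> k * tpow (v k) ys = (\<Sum>i=1..n. \<alpha> k * ((v k i)\<^sup>2 * tpow (v k) ys))"
        by (simp add: sum_distrib_left[symmetric] sum_distrib_right[symmetric])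
    qed simp
    also have "\<dots> = (\<Sum>i=1..n. \<Sum>k<r. \<alpha> k * tpow (v k) (i # i # ys))"
      by (subst sum.swap) (simp add: tpow_cons power2_eq_square mult.assoc)
    also have "\<dots> = (\<Sum>i=1..n. A (i # i # ys))"
      using rv(2) mem by (auto intro!: sum.cong)
    finally show "A (0 # 0 # ys) = (\<Sum>i=1..n. A (i # i # ys))" .
  qed
  with rv show ?thesis by blast
qed

end
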